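(* Let $p\ge 4$ be an integer and let $T_1$ be the tree obtained from an induced path $a_1\text{-}a_2\text{-}\cdots\text{-}a_p$ by adding three new vertices $x,z,y$ and the edges $a_px$, $xz$ and $a_py$. For every integer $d\ge 1$ (and every such $T_1$) there exists a polynomial $f$ such that for every integer $t\ge 1$ the following holds: if $G$ is a paw-free graph that is $T_1$-free and does not contain $K_d(t)$ as a subgraph, then $\chi(G)\le f(t)$.
   Context: All graphs are finite and simple. $\chi(G)$ is the chromatic number of $G$. A graph is $H$-free if it has no induced subgraph isomorphic to $H$. The paw is the graph on four vertices consisting of a triangle together with one additional vertex adjacent to exactly one vertex of the triangle. For integers $d,t\ge1$, $K_d(t)$ denotes the complete $d$-partite graph in which each of the $d$ parts has exactly $t$ vertices; "contains $K_d(t)$ as a subgraph" means as a (not necessarily induced) subgraph. *)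

theory Defs
  imports "HOL-Computational_Algebra.Polynomial"
begin

definition simple_graph :: "'a set \<Rightarrow> ('a \<Rightarrow> 'a \<Rightarrow> bool) \<Rightarrow> bool" where
  "simple_graph V E \<longleftrightarrow> finite V \<and> (\<forall>u v. E u v \<longrightarrow> u \<in> V \<and> v \<in> V)
     \<and> (\<forall>u v. E u v \<longrightarrow> E v u) \<and> (\<forall>v. \<not> E v v)"

definition contains_induced ::
  "'a set \<Rightarrow> ('a \<Rightarrow> 'a \<Rightarrow> bool) \<Rightarrow> 'b set \<Rightarrow> ('b \<Rightarrow> 'b \<Rightarrow> bool) \<Rightarrow> bool" where
  "contains_induced V E VH EH \<longleftrightarrow> (\<exists>\<phi>. inj_on \<phi> VH \<and> \<phi> ` VH \<subseteq> V \<and>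
     (\<forall>u\<in>VH. \<forall>v\<in>VH. E (\<phi> u) (\<phi> v) \<longleftrightarrow> EH u v))"

definition H_free ::
  "'a set \<Rightarrow> ('a \<Rightarrow> 'a \<Rightarrow> bool) \<Rightarrow> 'b set \<Rightarrow> ('b \<Rightarrow> 'b \<Rightarrow> bool) \<Rightarrow> bool" where
  "H_free V E VH EH \<longleftrightarrow> \<not> contains_induced V E VH EH"

definition contains_subgraph ::
  "'a set \<Rightarrow> ('a \<Rightarrow> 'a \<Rightarrow> bool) \<Rightarrow> 'b set \<Rightarrow> ('b \<Rightarrow> 'b \<Rightarrow> bool) \<Rightarrow> bool" where
  "contains_subgraph V E VH EH \<longleftrightarrow> (\<exists>\<phi>. inj_on \<phi> VH \<and> \<phi> ` VH \<subseteq> V \<and>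
     (\<forall>u\<in>VH. \<forall>v\<in>VH. EH u v \<longrightarrow> E (\<phi> u) (\<phi> v)))"

definition proper_colouring :: "'a set \<Rightarrow> ('a \<Rightarrow> 'a \<Rightarrow> bool) \<Rightarrow> nat \<Rightarrow> ('a \<Rightarrow> nat) \<Rightarrow> bool" where
  "proper_colouring V E k c \<longleftrightarrow> (\<forall>v\<in>V. c v < k) \<and>
     (\<forall>u\<in>V. \<forall>v\<in>V. E u v \<longrightarrow> c u \<noteq> c v)"

definition chromatic_number :: "'a set \<Rightarrow> ('a \<Rightarrow> 'a \<Rightarrow> bool) \<Rightarrow> nat" where
  "chromatic_number V E = (LEAST k. \<exists>c. proper_colouring V E k c)"

definition paw_V :: "nat set" where "paw_V = {0,1,2,3}"
definition paw_E :: "nat \<Rightarrow> nat \<Rightarrow> bool" where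
  "paw_E u v \<longleftrightarrow> {u,v} \<in> {{0,1},{1,2},{0,2},{2,3}}"

text \<open>The tree T1 for parameter p: path a_i = i (1 \<le> i \<le> p), x = p+1, z = p+2,
  y = p+3, with edges a_i a_(i+1), a_p x, x z, a_p y.\<close>
definition T1_V :: "nat \<Rightarrow> nat set" where "T1_V p = {1..p+3}"
definition T1_E :: "nat \<Rightarrow> nat \<Rightarrow> nat \<Rightarrow> bool" where
  "T1_E p u v \<longleftrightarrow>
     (\<exists>i. 1 \<le> i \<and> i < p \<and> {u,v} = {i, i+1}) \<or>
     {u,v} = {p, p+1} \<or> {u,v} = {p+1, p+2} \<or> {u,v} = {p, p+3}"

definition Kdt_V :: "nat \<Rightarrow> nat \<Rightarrow> (nat \<times> nat) set" where
  "Kdt_V d t = {0..<d} \<times> {0..<t}"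
definition Kdt_E :: "(nat \<times> nat) \<Rightarrow> (nat \<times> nat) \<Rightarrow> bool" where
  "Kdt_E u v \<longleftrightarrow> fst u \<noteq> fst v"

end

theory Submission
  imports Defs
begin

lemma path_part:
  assumes "u \<ge> 1" "v \<ge> 1"
  shows "(\<exists>i. 1 \<le> i \<and> i < p \<and> (u = i \<and> v = i+1 \<or> u = i+1 \<and> v = i)) \<longleftrightarrow>
    (u \<le> p \<and> v \<le> p \<and> (v = Suc u \<or> u = Suc v))"
proof
  assume "\<exists>i. 1 \<le> i \<and> i < p \<and> (u = i \<and> v = i+1 \<or> u = i+1 \<and> v = i)"
  then obtain i where "1 \<le> i" "i < p" "u = i \<and> v = i+1 \<or> u = i+1 \<and> v = i" by blast
  then show "u \<le> p \<and> v \<le> p \<and> (v = Suc u \<or> u = Suc v)" by auto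
next
  assume h: "u \<le> p \<and> v \<le> p \<and> (v = Suc u \<or> u = Suc v)"
  show "\<exists>i. 1 \<le> i \<and> i < p \<and> (u = i \<and> v = i+1 \<or> u = i+1 \<and> v = i)"
  proof (cases "v = Suc u")
    case True then show ?thesis using h assms by (intro exI[of _ u]) simp
  next
    case False then show ?thesis using h assms by (intro exI[of _ v]) simp
  qed
qed

lemma T1_E_char:
  assumes "u \<in> {1..p+3}" "v \<in> {1..p+3}" "p \<ge> 1"
  shows "T1_E p u v \<longleftrightarrow> ((u \<le> p \<and> v \<le> p \<and> (v = Suc u \<or> u = Suc v)) \<or>
     (u = p \<and> v = p+1) \<or> (u = p+1 \<and> v = p) \<or> (u = p+1 \<and> v = p+2) \<or> (u = p+2 \<and> v = p+1)
     \<or> (u = p \<and> v = p+3) \<or> (u = p+3 \<and> v = p))"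
proof -
  have "T1_E p u v \<longleftrightarrow> (\<exists>i. 1 \<le> i \<and> i < p \<and> (u = i \<and> v = i+1 \<or> u = i+1 \<and> v = i)) \<or>
     (u = p \<and> v = p+1 \<or> u = p+1 \<and> v = p) \<or> (u = p+1 \<and> v = p+2 \<or> u = p+2 \<and> v = p+1) \<or>
     (u = p \<and> v = p+3 \<or> u = p+3 \<and> v = p)"
    by (simp only: T1_E_def doubleton_eq_iff)
  moreover have "u \<ge> 1" "v \<ge> 1" using assms by auto
  ultimately show ?thesis using path_part[of u v p] by blast
qed

lemma T1_embed:
  assumes symE: "\<forall>u v. E u v \<longrightarrow> E v u" and irr: "\<forall>v. \<not> E v v"
    and aV: "\<forall>i\<in>{1..p}. a i \<in> V" and xV: "x \<in> V" and yV: "y \<in> V" and zV: "z \<in> V"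
    and ainj: "inj_on a {1..p}"
    and apath: "\<forall>i\<in>{1..p}. \<forall>j\<in>{1..p}. E (a i) (a j) \<longleftrightarrow> (j = Suc i \<or> i = Suc j)"
    and xa: "\<forall>i\<in>{1..p}. E x (a i) \<longleftrightarrow> i = p"
    and ya: "\<forall>i\<in>{1..p}. E y (a i) \<longleftrightarrow> i = p"
    and za: "\<forall>i\<in>{1..p}. \<not> E z (a i)"
    and xz: "E x z" and xy: "\<not> E x y" and zy: "\<not> E z y" and p1: "p \<ge> 1"
    and dx: "x \<notin> a ` {1..p}" and dy: "y \<notin> a ` {1..p}" and dz: "z \<notin> a ` {1..p}"
    and dxy: "x \<noteq> y" and dxz: "x \<noteq> z" and dyz: "y \<noteq> z"
  shows "contains_induced V E (T1_V p) (T1_E p)"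
proof -
  define \<phi> where "\<phi> = (\<lambda>i. if i \<le> p then a i else if i = p+1 then x else if i = p+2 then z else y)"
  have phi: "\<And>i. i \<le> p \<Longrightarrow> \<phi> i = a i" "\<phi> (p+1) = x" "\<phi> (p+2) = z" "\<phi> (p+3) = y"
    by (simp_all add: \<phi>_def)
  have cases4: "\<And>u. u \<in> {1..p+3} \<Longrightarrow> (u \<in> {1..p}) \<or> u = p+1 \<or> u = p+2 \<or> u = p+3"
    by auto
  have inj: "inj_on \<phi> {1..p+3}"
  proof (rule inj_onI)
    fix u v assume u: "u \<in> {1..p+3}" and v: "v \<in> {1..p+3}" and e: "\<phi> u = \<phi> v"
    have ia: "\<And>i. i \<in> {1..p} \<Longrightarrow> a i \<noteq> x \<and> a i \<noteq> y \<and> a i \<noteq> z" using dx dy dz by blast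
    from cases4[OF u] cases4[OF v] show "u = v"
    proof (elim disjE)
      assume uv: "u \<in> {1..p}" "v \<in> {1..p}"
      then have "a u = a v" using e phi(1) by simp
      then show ?thesis using inj_onD[OF ainj] uv by blast
    next
      assume "u \<in> {1..p}" "v = p+1" then show ?thesis using e phi ia[of u] by simp
    next
      assume "u \<in> {1..p}" "v = p+2" then show ?thesis using e phi ia[of u] by simp
    next
      assume "u \<in> {1..p}" "v = p+3" then show ?thesis using e phi ia[of u] by simp
    next
      assume "v \<in> {1..p}" "u = p+1" then show ?thesis using e phi ia[of v] by simp
    next
      assume "v \<in> {1..p}" "u = p+2" then show ?thesis using e phi ia[of v] by simp
    next
      assume "v \<in> {1..p}" "u = p+3" then show ?thesis using e phi ia[of v] by simp
    qed (use e phi dxy dxz dyz in simp_all)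
  qed
  have img: "\<phi> ` {1..p+3} \<subseteq> V"
  proof
    fix w assume "w \<in> \<phi> ` {1..p+3}"
    then obtain u where u: "u \<in> {1..p+3}" and w: "w = \<phi> u" by blast
    from cases4[OF u] show "w \<in> V" using w phi aV xV yV zV by auto
  qed
  have xa': "\<forall>i\<in>{1..p}. E (a i) x \<longleftrightarrow> i = p" using xa symE by blast
  have ya': "\<forall>i\<in>{1..p}. E (a i) y \<longleftrightarrow> i = p" using ya symE by blast
  have za': "\<forall>i\<in>{1..p}. \<not> E (a i) z" using za symE by blast
  have zx: "E z x" using xz symE by blast
  have yx: "\<not> E y x" using xy symE by blast
  have yz: "\<not> E y z" using zy symE by blast
  have adj: "\<forall>u\<in>{1..p+3}. \<forall>v\<in>{1..p+3}. E (\<phi> u) (\<phi> v) \<longleftrightarrow> T1_E p u v"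
  proof (intro ballI)
    fix u v assume u: "u \<in> {1..p+3}" and v: "v \<in> {1..p+3}"
    note ch = T1_E_char[OF u v p1]
    from cases4[OF u] cases4[OF v] show "E (\<phi> u) (\<phi> v) \<longleftrightarrow> T1_E p u v"
    proof (elim disjE)
      assume uu: "u \<in> {1..p}" and vv: "v \<in> {1..p}"
      then show ?thesis unfolding ch using phi(1) apath by auto
    next
      assume uu: "u \<in> {1..p}" and vv: "v = p+1"
      then show ?thesis unfolding ch using phi xa' by auto
    next
      assume uu: "u \<in> {1..p}" and vv: "v = p+2"
      then show ?thesis unfolding ch using phi za' by auto
    next
      assume uu: "u \<in> {1..p}" and vv: "v = p+3"
      then show ?thesis unfolding ch using phi ya' by auto
    next
      assume uu: "u = p+1" and vv: "v \<in> {1..p}"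
      then show ?thesis unfolding ch using phi xa by auto
    next
      assume uu: "u = p+2" and vv: "v \<in> {1..p}"
      then show ?thesis unfolding ch using phi za by auto
    next
      assume uu: "u = p+3" and vv: "v \<in> {1..p}"
      then show ?thesis unfolding ch using phi ya by auto
    qed (use ch phi irr xz zx xy yx zy yz in \<open>simp_all\<close>)
  qed
  show ?thesis unfolding contains_induced_def T1_V_def using inj img adj by blast
qed

lemma paw_embed:
  assumes symE: "\<forall>u v. E u v \<longrightarrow> E v u" and irr: "\<forall>v. \<not> E v v"
    and V: "a \<in> V" "b \<in> V" "v \<in> V" "c \<in> V"
    and e: "E v a" "E v b" "E a b" "E v c" "\<not> E c a" "\<not> E c b"
  shows "contains_induced V E paw_V paw_E"
proof -
  define \<phi> where "\<phi> = (\<lambda>i::nat. if i = 0 then a else if i = 1 then b else if i = 2 then v else c)"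
  have d: "a \<noteq> b" "a \<noteq> v" "b \<noteq> v" "c \<noteq> v" "c \<noteq> a" "c \<noteq> b"
    using e irr symE by metis+
  have inj: "inj_on \<phi> paw_V" unfolding inj_on_def paw_V_def \<phi>_def using d by auto
  have img: "\<phi> ` paw_V \<subseteq> V" unfolding paw_V_def \<phi>_def using V by auto
  have s: "E a v" "E b v" "E b a" "E c v" "\<not> E a c" "\<not> E b c" using e symE by blast+
  have adj: "\<forall>x\<in>paw_V. \<forall>y\<in>paw_V. E (\<phi> x) (\<phi> y) \<longleftrightarrow> paw_E x y"
    unfolding paw_V_def paw_E_def \<phi>_def using e s irr by (auto simp: doubleton_eq_iff insert_commute)
  show ?thesis unfolding contains_induced_def using inj img adj by blast
qed


locale sgraph =
  fixes V :: "nat set" and E :: "nat \<Rightarrow> nat \<Rightarrow> bool"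
  assumes sg: "simple_graph V E"
begin

lemma finV: "finite V" using sg unfolding simple_graph_def by blast
lemma symE: "E u v \<Longrightarrow> E v u" using sg unfolding simple_graph_def by blast
lemma irr: "\<not> E v v" using sg unfolding simple_graph_def by blast
lemma edgeV: "E u v \<Longrightarrow> u \<in> V \<and> v \<in> V" using sg unfolding simple_graph_def by blast

fun Rs :: "nat set \<Rightarrow> nat \<Rightarrow> nat \<Rightarrow> nat set" where
  "Rs X r 0 = {r}"
| "Rs X r (Suc n) = Rs X r n \<union> {v \<in> X. \<exists>u\<in>Rs X r n. E u v}"

definition rch :: "nat set \<Rightarrow> nat \<Rightarrow> nat \<Rightarrow> bool" where
  "rch X r v \<longleftrightarrow> (\<exists>n. v \<in> Rs X r n)"

definition lev :: "nat set \<Rightarrow> nat \<Rightarrow> nat \<Rightarrow> nat" where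
  "lev X r v = (LEAST n. v \<in> Rs X r n)"

lemma Rs_mono: "m \<le> n \<Longrightarrow> Rs X r m \<subseteq> Rs X r n"
proof (induction n)
  case 0 then show ?case by simp
next
  case (Suc n) then show ?case by (cases "m = Suc n") auto
qed

lemma Rs_sub: "r \<in> X \<Longrightarrow> Rs X r n \<subseteq> X"
  by (induction n) auto

lemma rch_X: "r \<in> X \<Longrightarrow> rch X r v \<Longrightarrow> v \<in> X"
  using Rs_sub unfolding rch_def by blast

lemma lev_in: "rch X r v \<Longrightarrow> v \<in> Rs X r (lev X r v)"
  unfolding rch_def lev_def by (meson LeastI)

lemma lev_le: "v \<in> Rs X r n \<Longrightarrow> lev X r v \<le> n"
  unfolding lev_def by (rule Least_le)

lemma L1: assumes "rch X r u" "v \<in> X" "E u v"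
  shows "rch X r v \<and> lev X r v \<le> Suc (lev X r u)"
proof -
  have "v \<in> Rs X r (Suc (lev X r u))" using lev_in[OF assms(1)] assms(2,3) by auto
  then show ?thesis unfolding rch_def using lev_le by blast
qed

lemma L1': assumes "r \<in> X" "rch X r u" "rch X r v" "E u v"
  shows "lev X r v \<le> Suc (lev X r u) \<and> lev X r u \<le> Suc (lev X r v)"
  using L1[OF assms(2) rch_X[OF assms(1,3)] assms(4)] L1[OF assms(3) rch_X[OF assms(1,2)] symE[OF assms(4)]]
  by blast

lemma L2: assumes "r \<in> X" "rch X r v" "lev X r v = Suc m"
  shows "\<exists>u. rch X r u \<and> lev X r u = m \<and> E u v"
proof -
  have v1: "v \<in> Rs X r (Suc m)" using lev_in[OF assms(2)] assms(3) by simp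
  have v0: "v \<notin> Rs X r m"
  proof
    assume "v \<in> Rs X r m"
    then have "lev X r v \<le> m" by (rule lev_le)
    then show False using assms(3) by simp
  qed
  from v1 v0 obtain u where u: "u \<in> Rs X r m" "E u v" by auto
  have ru: "rch X r u" using u(1) unfolding rch_def by blast
  have "lev X r u \<le> m" using u(1) by (rule lev_le)
  moreover have "lev X r v \<le> Suc (lev X r u)" using L1[OF ru rch_X[OF assms(1,2)] u(2)] by blast
  ultimately have "lev X r u = m" using assms(3) by simp
  then show ?thesis using ru u(2) by blast
qed

lemma chain: assumes "r \<in> X"
  shows "rch X r v \<Longrightarrow> lev X r v = n \<Longrightarrow> \<exists>w. w 0 = v \<and> (\<forall>j\<le>n. rch X r (w j) \<and> lev X r (w j) = n - j)
     \<and> (\<forall>j<n. E (w j) (w (Suc j)))"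
proof (induction n arbitrary: v)
  case 0
  then show ?case by (intro exI[of _ "\<lambda>_. v"]) simp
next
  case (Suc n)
  obtain u where u: "rch X r u" "lev X r u = n" "E u v" using L2[OF assms Suc.prems] by blast
  obtain w where w: "w 0 = u" "\<forall>j\<le>n. rch X r (w j) \<and> lev X r (w j) = n - j" "\<forall>j<n. E (w j) (w (Suc j))"
    using Suc.IH[OF u(1,2)] by blast
  define w' where "w' = (\<lambda>j. if j = 0 then v else w (j - 1))"
  have "w' 0 = v" unfolding w'_def by simp
  moreover have "\<forall>j\<le>Suc n. rch X r (w' j) \<and> lev X r (w' j) = Suc n - j"
  proof (intro allI impI)
    fix j assume j: "j \<le> Suc n"
    show "rch X r (w' j) \<and> lev X r (w' j) = Suc n - j"
    proof (cases j)
      case 0 then show ?thesis using Suc.prems unfolding w'_def by simp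
    next
      case (Suc j') then show ?thesis using w(2) j unfolding w'_def by simp
    qed
  qed
  moreover have "\<forall>j<Suc n. E (w' j) (w' (Suc j))"
  proof (intro allI impI)
    fix j assume j: "j < Suc n"
    show "E (w' j) (w' (Suc j))"
    proof (cases j)
      case 0 then show ?thesis using w(1) u(3) symE unfolding w'_def by simp
    next
      case (Suc j') then show ?thesis using w(3) j unfolding w'_def by simp
    qed
  qed
  ultimately show ?case by blast
qed

end


context sgraph begin

lemma chain_path:
  assumes rX: "r \<in> X"
    and w: "\<forall>j\<le>m. rch X r (w j) \<and> lev X r (w j) = m - j" "\<forall>j<m. E (w j) (w (Suc j))"
    and s: "s \<le> m" and t: "t \<le> m"
  shows "E (w s) (w t) \<longleftrightarrow> (t = Suc s \<or> s = Suc t)"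
proof
  assume e: "E (w s) (w t)"
  have "lev X r (w t) \<le> Suc (lev X r (w s)) \<and> lev X r (w s) \<le> Suc (lev X r (w t))"
    using L1'[OF rX _ _ e] w(1) s t by blast
  then have "t \<le> Suc s \<and> s \<le> Suc t" using w(1) s t by auto
  moreover have "s \<noteq> t" using e irr by blast
  ultimately show "t = Suc s \<or> s = Suc t" by auto
next
  assume "t = Suc s \<or> s = Suc t"
  then show "E (w s) (w t)"
  proof
    assume "t = Suc s" then show ?thesis using w(2) t by auto
  next
    assume "s = Suc t" then show ?thesis using w(2) s symE by auto
  qed
qed

lemma far_nonadj:
  assumes rX: "r \<in> X"
    and w: "\<forall>j\<le>m. rch X r (w j) \<and> lev X r (w j) = m - j"
    and s: "2 \<le> s" "s \<le> m" and q: "rch X r q" "lev X r q \<ge> m"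
  shows "\<not> E q (w s)"
proof
  assume e: "E q (w s)"
  have "lev X r q \<le> Suc (lev X r (w s))" using L1'[OF rX q(1) _ e] w s by blast
  then show False using w s q by auto
qed

lemma fork:
  assumes T1free: "\<not> contains_induced V E (T1_V p) (T1_E p)"
    and XV: "X \<subseteq> V" and rX: "r \<in> X"
    and w0: "w 0 = a"
    and w: "\<forall>j\<le>m. rch X r (w j) \<and> lev X r (w j) = m - j" "\<forall>j<m. E (w j) (w (Suc j))"
    and m: "m \<ge> p - 1" "m \<ge> 1" and p1: "p \<ge> 1"
    and r: "rch X r x" "rch X r y" "rch X r z"
    and l: "lev X r x \<ge> m" "lev X r y \<ge> m" "lev X r z \<ge> m"
    and e: "E a x" "E a y" "E x z" "\<not> E x y" "\<not> E z y" "\<not> E z a"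
      "\<not> E x (w 1)" "\<not> E y (w 1)" "\<not> E z (w 1)" "x \<noteq> y"
  shows False
proof -
  define aa where "aa = (\<lambda>i. w (p - i))"
  have wX: "\<And>j. j \<le> m \<Longrightarrow> w j \<in> V" using w(1) rch_X[OF rX] XV by blast
  have xyzV: "x \<in> V" "y \<in> V" "z \<in> V" using r rch_X[OF rX] XV by blast+
  have aV: "\<forall>i\<in>{1..p}. aa i \<in> V" unfolding aa_def using wX m by auto
  have ainj: "inj_on aa {1..p}"
  proof (rule inj_onI)
    fix i j assume i: "i \<in> {1..p}" and j: "j \<in> {1..p}" and e: "aa i = aa j"
    have "lev X r (w (p - i)) = lev X r (w (p - j))" using e unfolding aa_def by simp
    then have "m - (p - i) = m - (p - j)" using w(1) i j m by auto
    then show "i = j" using i j m by auto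
  qed
  have apath: "\<forall>i\<in>{1..p}. \<forall>j\<in>{1..p}. E (aa i) (aa j) \<longleftrightarrow> (j = Suc i \<or> i = Suc j)"
  proof (intro ballI)
    fix i j assume i: "i \<in> {1..p}" and j: "j \<in> {1..p}"
    have "E (aa i) (aa j) \<longleftrightarrow> (p - j = Suc (p - i) \<or> p - i = Suc (p - j))"
      unfolding aa_def using chain_path[OF rX w, of "p - i" "p - j"] i j m by auto
    also have "\<dots> \<longleftrightarrow> (j = Suc i \<or> i = Suc j)" using i j by auto
    finally show "E (aa i) (aa j) \<longleftrightarrow> (j = Suc i \<or> i = Suc j)" .
  qed
  have aw1: "w 1 = aa (p - 1)" unfolding aa_def using p1 by simp
  have gen: "\<And>q. rch X r q \<Longrightarrow> lev X r q \<ge> m \<Longrightarrow> \<not> E q (w 1) \<Longrightarrow> i \<in> {1..p} \<Longrightarrow> i \<noteq> p \<Longrightarrow> \<not> E q (aa i)" for i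
  proof -
    fix q assume q: "rch X r q" "lev X r q \<ge> m" "\<not> E q (w 1)" and i: "i \<in> {1..p}" "i \<noteq> p"
    show "\<not> E q (aa i)"
    proof (cases "p - i = 1")
      case True then show ?thesis using q(3) unfolding aa_def by simp
    next
      case False
      then have "2 \<le> p - i" "p - i \<le> m" using i m by auto
      then show ?thesis using far_nonadj[OF rX w(1) _ _ q(1,2)] unfolding aa_def by blast
    qed
  qed
  have aap: "aa p = a" unfolding aa_def using w0 by simp
  have xa: "\<forall>i\<in>{1..p}. E x (aa i) \<longleftrightarrow> i = p"
    using gen[OF r(1) l(1) e(7)] aap e(1) symE by blast
  have ya: "\<forall>i\<in>{1..p}. E y (aa i) \<longleftrightarrow> i = p"
    using gen[OF r(2) l(2) e(8)] aap e(2) symE by blast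
  have za: "\<forall>i\<in>{1..p}. \<not> E z (aa i)"
    using gen[OF r(3) l(3) e(9)] aap e(6) by metis
  have lowlev: "\<And>i. i \<in> {1..p} \<Longrightarrow> i \<noteq> p \<Longrightarrow> lev X r (aa i) < m"
    unfolding aa_def using w(1) m by auto
  have dq: "\<And>q. rch X r q \<Longrightarrow> lev X r q \<ge> m \<Longrightarrow> q \<noteq> a \<Longrightarrow> q \<notin> aa ` {1..p}"
  proof
    fix q assume q: "rch X r q" "lev X r q \<ge> m" "q \<noteq> a" "q \<in> aa ` {1..p}"
    then obtain i where i: "i \<in> {1..p}" "q = aa i" by blast
    show False
    proof (cases "i = p")
      case True then show False using q(3) i aap by simp
    next
      case False then show False using lowlev[OF i(1) False] q(2) i(2) by simp
    qed
  qed
  have w01: "E a (w 1)" using w(2) m w0 by (metis One_nat_def less_le_trans zero_less_one)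
  have dx: "x \<notin> aa ` {1..p}" using dq[OF r(1) l(1)] e(1) irr by blast
  have dy: "y \<notin> aa ` {1..p}" using dq[OF r(2) l(2)] e(2) irr by blast
  have dz: "z \<notin> aa ` {1..p}" using dq[OF r(3) l(3)] e(9) w01 by blast
  have dxz: "x \<noteq> z" using e(3) irr by blast
  have dyz: "y \<noteq> z" using e(3) e(4) by blast
  have "contains_induced V E (T1_V p) (T1_E p)"
    by (rule T1_embed[OF _ _ aV xyzV ainj apath xa ya za e(3) e(4) e(5) p1 dx dy dz e(10) dxz dyz])
       (use symE irr in blast)+
  then show False using T1free by blast
qed

end

context sgraph begin

definition reachS :: "nat set \<Rightarrow> nat \<Rightarrow> nat \<Rightarrow> bool" where
  "reachS S a b \<longleftrightarrow> (\<lambda>u v. u \<in> S \<and> v \<in> S \<and> E u v)\<^sup>*\<^sup>* a b"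

definition tfree :: "nat set \<Rightarrow> bool" where
  "tfree Y \<longleftrightarrow> (\<forall>a b c. a \<in> Y \<longrightarrow> b \<in> Y \<longrightarrow> c \<in> Y \<longrightarrow> E a b \<longrightarrow> E b c \<longrightarrow> E a c \<longrightarrow> False)"

lemma tfD: "tfree Y \<Longrightarrow> a \<in> Y \<Longrightarrow> b \<in> Y \<Longrightarrow> c \<in> Y \<Longrightarrow> E a b \<Longrightarrow> E b c \<Longrightarrow> E a c \<Longrightarrow> False"
  unfolding tfree_def by blast

lemma lev_gap:
  assumes "r \<in> X" "rch X r q" "rch X r q'" "lev X r q \<ge> lev X r q' + 2"
  shows "\<not> E q q'"
  using L1'[OF assms(1,3,2)] assms(4) symE by fastforce

definition qpath :: "nat \<Rightarrow> (nat \<Rightarrow> nat) \<Rightarrow> bool" where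
  "qpath k q \<longleftrightarrow> (\<forall>i\<in>{1..k}. q i \<in> V) \<and> inj_on q {1..k} \<and>
     (\<forall>i\<in>{1..k}. \<forall>j\<in>{1..k}. E (q i) (q j) \<longleftrightarrow> (j = Suc i \<or> i = Suc j))"

lemma twin:
  assumes T1free: "\<not> contains_induced V E (T1_V p) (T1_E p)" and p4: "p \<ge> 4"
    and XV: "X \<subseteq> V" and rX: "r \<in> X" and tf: "tfree X"
    and n: "n \<ge> p"
    and c: "rch X r c" "lev X r c = n" and x: "rch X r x" "lev X r x = n"
    and z: "rch X r z" "lev X r z = n" and y: "rch X r y" "lev X r y = n"
    and e: "E c x" "E x z" "z \<noteq> c" "E c y"
  shows "E z y"
proof (rule ccontr)
  assume nzy: "\<not> E z y"
  have inX: "c \<in> X" "x \<in> X" "y \<in> X" "z \<in> X" using c x y z rch_X[OF rX] by blast+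
  obtain w where w: "w 0 = c" "\<forall>j\<le>n. rch X r (w j) \<and> lev X r (w j) = n - j" "\<forall>j<n. E (w j) (w (Suc j))"
    using chain[OF rX c(1) c(2)] by blast
  have n1: "n \<ge> 1" using n p4 by simp
  have cw1: "E c (w 1)" using w(1) w(3) n1 by (metis One_nat_def less_le_trans zero_less_one)
  have w1: "rch X r (w 1)" "lev X r (w 1) = n - 1" using w(2) n1 by auto
  have w1X: "w 1 \<in> X" using w1 rch_X[OF rX] by blast
  have xy: "x \<noteq> y" using nzy e(2) symE by blast
  show False
  proof (cases "E z (w 1)")
    case False
    show False
    proof (rule fork[OF T1free XV rX w(1) w(2) w(3) _ n1 _ x(1) y(1) z(1)])
      show "n \<ge> p - 1" using n by simp
      show "p \<ge> 1" using p4 by simp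
      show "n \<le> lev X r x" "n \<le> lev X r y" "n \<le> lev X r z" using x y z by simp_all
      show "E c x" "E c y" "E x z" "\<not> E z y" "\<not> E z (w 1)" "x \<noteq> y" using e nzy False xy by simp_all
      show "\<not> E x y" using tfD[OF tf inX(1) inX(2) inX(3) e(1) _ e(4)] by blast
      show "\<not> E z c" using tfD[OF tf inX(1) inX(2) inX(4) e(1) e(2)] symE by blast
      show "\<not> E x (w 1)" using tfD[OF tf inX(1) inX(2) w1X e(1) _ cw1] by blast
      show "\<not> E y (w 1)" using tfD[OF tf inX(1) inX(3) w1X e(4) _ cw1] by blast
    qed
  next
    case True
    define u where "u = w 1"
    have u: "rch X r u" "lev X r u = n - 1" using w1 u_def by auto
    obtain w' where w': "w' 0 = u" "\<forall>j\<le>n-1. rch X r (w' j) \<and> lev X r (w' j) = (n - 1) - j"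
      "\<forall>j<n-1. E (w' j) (w' (Suc j))"
      using chain[OF rX u(1) u(2)] by blast
    have n2: "n - 1 \<ge> 1" using n p4 by simp
    have w'1: "rch X r (w' 1)" "lev X r (w' 1) = n - 2" using w'(2) n2 by auto
    have uX: "u \<in> X" using w1X u_def by simp
    have uc: "E u c" using cw1 symE u_def by blast
    have uz: "E u z" using True symE u_def by blast
    show False
    proof (rule fork[OF T1free XV rX w'(1) w'(2) w'(3) _ n2 _ c(1) z(1) y(1)])
      show "n - 1 \<ge> p - 1" using n by simp
      show "p \<ge> 1" using p4 by simp
      show "n - 1 \<le> lev X r c" "n - 1 \<le> lev X r z" "n - 1 \<le> lev X r y" using c y z by simp_all
      show "E u c" "E u z" "E c y" using uc uz e by simp_all
      show "c \<noteq> z" using e(3) by simp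
      show "\<not> E y z" using nzy symE by blast
      show "\<not> E c z" using tfD[OF tf uX inX(1) inX(4) uc _ uz] by blast
      show "\<not> E y u" using tfD[OF tf uX inX(1) inX(3) uc e(4)] symE by blast
      show "\<not> E c (w' 1)" "\<not> E z (w' 1)" "\<not> E y (w' 1)"
        using lev_gap[OF rX _ w'1(1)] w'1(2) c z y n p4 by simp_all
    qed
  qed
qed

end

context sgraph begin

lemma tfree_mono: "tfree Y \<Longrightarrow> X \<subseteq> Y \<Longrightarrow> tfree X"
  unfolding tfree_def by blast

definition Nh :: "nat set \<Rightarrow> nat \<Rightarrow> nat \<Rightarrow> nat set" where
  "Nh X r v = {w. rch X r w \<and> lev X r w = lev X r v \<and> E v w}"

definition Nh2 :: "nat set \<Rightarrow> nat \<Rightarrow> nat \<Rightarrow> nat set" where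
  "Nh2 X r v = {z. rch X r z \<and> lev X r z = lev X r v \<and> (\<exists>x. rch X r x \<and> lev X r x = lev X r v \<and> E v x \<and> E x z)}"

definition side :: "nat set \<Rightarrow> nat \<Rightarrow> nat \<Rightarrow> nat" where
  "side X r v = (if Nh X r v \<noteq> {} \<and> Min (Nh X r v) < Min (Nh2 X r v) then 1 else 0)"

lemma side_le: "side X r v \<le> 1" unfolding side_def by simp

lemma sides:
  assumes T1free: "\<not> contains_induced V E (T1_V p) (T1_E p)" and p4: "p \<ge> 4"
    and XV: "X \<subseteq> V" and rX: "r \<in> X" and tf: "tfree X"
    and v: "rch X r v" and w: "rch X r w" and lv: "lev X r v \<ge> p" and lw: "lev X r w = lev X r v"
    and e: "E v w"
  shows "side X r v \<noteq> side X r w"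
proof -
  define n where "n = lev X r v"
  have n: "n \<ge> p" using lv n_def by simp
  have N2v: "Nh2 X r v = Nh X r w"
  proof
    show "Nh2 X r v \<subseteq> Nh X r w"
    proof
      fix z assume "z \<in> Nh2 X r v"
      then obtain x where z: "rch X r z" "lev X r z = n" and x: "rch X r x" "lev X r x = n" "E v x" "E x z"
        unfolding Nh2_def n_def by blast
      show "z \<in> Nh X r w"
      proof (cases "z = v")
        case True then show ?thesis using v lw symE[OF e] unfolding Nh_def by auto
      next
        case False
        have "E z w" using twin[OF T1free p4 XV rX tf n v n_def[symmetric] x(1,2) z w _ x(3) x(4) False e]
          lw n_def by simp
        then show ?thesis using z lw n_def symE[OF \<open>E z w\<close>] unfolding Nh_def by auto
      qed
    qed
  next
    show "Nh X r w \<subseteq> Nh2 X r v"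
      using w lw e unfolding Nh_def Nh2_def by auto
  qed
  have N2w: "Nh2 X r w = Nh X r v"
  proof
    show "Nh2 X r w \<subseteq> Nh X r v"
    proof
      fix z assume "z \<in> Nh2 X r w"
      then have "rch X r z \<and> lev X r z = lev X r w \<and> (\<exists>x. rch X r x \<and> lev X r x = lev X r w \<and> E w x \<and> E x z)"
        unfolding Nh2_def by simp
      moreover have lwn: "lev X r w = n" using lw n_def by simp
      ultimately obtain x where z: "rch X r z" "lev X r z = n" and x: "rch X r x" "lev X r x = n" "E w x" "E x z"
        by auto
      show "z \<in> Nh X r v"
      proof (cases "z = w")
        case True then show ?thesis using w lw e unfolding Nh_def by auto
      next
        case False
        have "E z v" using twin[OF T1free p4 XV rX tf n w lwn x(1,2) z v n_def[symmetric] x(3) x(4) False symE[OF e]] .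
        then show ?thesis using z lw n_def symE[OF \<open>E z v\<close>] unfolding Nh_def by auto
      qed
    qed
  next
    show "Nh X r v \<subseteq> Nh2 X r w"
      using v lw symE[OF e] unfolding Nh_def Nh2_def by auto
  qed
  have fin: "finite (Nh X r u)" for u
  proof -
    have "Nh X r u \<subseteq> V" unfolding Nh_def using edgeV by blast
    then show ?thesis using finite_subset finV by blast
  qed
  have ne: "Nh X r v \<noteq> {}" "Nh X r w \<noteq> {}" using v w lw e symE[OF e] unfolding Nh_def by auto
  have disj: "Nh X r v \<inter> Nh X r w = {}"
  proof (rule ccontr)
    assume "Nh X r v \<inter> Nh X r w \<noteq> {}"
    then obtain z where "z \<in> Nh X r v" "z \<in> Nh X r w" by blast
    then have z: "rch X r z" "E v z" "E w z" unfolding Nh_def by auto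
    show False using tfD[OF tf rch_X[OF rX v] rch_X[OF rX w] rch_X[OF rX z(1)] e z(3) z(2)] .
  qed
  have mins: "Min (Nh X r v) \<noteq> Min (Nh X r w)"
  proof
    assume eq: "Min (Nh X r v) = Min (Nh X r w)"
    have "Min (Nh X r v) \<in> Nh X r v \<inter> Nh X r w" using Min_in[OF fin ne(1)] Min_in[OF fin ne(2)] eq by simp
    then show False using disj by simp
  qed
  show ?thesis unfolding side_def N2v N2w using ne mins by (auto simp add: linorder_neq_iff)
qed

end

context sgraph begin

lemma base:
  assumes T1free: "\<not> contains_induced V E (T1_V p) (T1_E p)" and p4: "p \<ge> 4"
    and qp: "qpath p q" and DV: "D \<subseteq> V" and Dq: "D \<inter> q ` {1..p} = {}"
    and anti: "\<forall>v\<in>D. \<forall>j\<in>{1..<p}. \<not> E v (q j)"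
    and reach: "\<forall>v\<in>D. reachS (D \<union> {q p}) (q p) v"
    and tf: "tfree (q ` {1..p} \<union> D)"
  shows "\<exists>c. proper_colouring D E 4 c"
proof -
  define X where "X = q ` {1..p} \<union> D"
  define r where "r = q 1"
  have qV: "\<forall>i\<in>{1..p}. q i \<in> V" and qinj: "inj_on q {1..p}"
    and qE: "\<forall>i\<in>{1..p}. \<forall>j\<in>{1..p}. E (q i) (q j) \<longleftrightarrow> (j = Suc i \<or> i = Suc j)"
    using qp unfolding qpath_def by blast+
  have rX: "r \<in> X" unfolding X_def r_def using p4 by auto
  have XV: "X \<subseteq> V" unfolding X_def using qV DV by auto
  have tfX: "tfree X" using tf unfolding X_def .
  have RsQ: "n < p \<Longrightarrow> Rs X r n \<subseteq> q ` {1..Suc n}" for n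
  proof (induction n)
    case 0 then show ?case unfolding r_def by simp
  next
    case (Suc n)
    have IH: "Rs X r n \<subseteq> q ` {1..Suc n}" using Suc by simp
    show ?case
    proof
      fix v assume "v \<in> Rs X r (Suc n)"
      then have "v \<in> Rs X r n \<or> (v \<in> X \<and> (\<exists>u\<in>Rs X r n. E u v))" by simp
      then show "v \<in> q ` {1..Suc (Suc n)}"
      proof
        assume "v \<in> Rs X r n" then show ?thesis using IH by auto
      next
        assume h: "v \<in> X \<and> (\<exists>u\<in>Rs X r n. E u v)"
        then obtain u where u: "u \<in> Rs X r n" "E u v" by blast
        then obtain i where i: "i \<in> {1..Suc n}" "u = q i" using IH by blast
        have ip: "i \<in> {1..<p}" using i Suc.prems by auto
        show ?thesis
        proof (cases "v \<in> D")
          case True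
          then have "\<not> E v (q i)" using anti ip by blast
          then show ?thesis using u i symE by blast
        next
          case False
          then obtain j where j: "j \<in> {1..p}" "v = q j" using h unfolding X_def by blast
          have "j = Suc i \<or> i = Suc j" using qE i j u Suc.prems by auto
          then have "j \<in> {1..Suc (Suc n)}" using i j by auto
          then show ?thesis using j by blast
        qed
      qed
    qed
  qed
  have qRs: "j \<in> {1..p} \<Longrightarrow> q j \<in> Rs X r (j - 1)" for j
  proof (induction j)
    case 0 then show ?case by simp
  next
    case (Suc j)
    show ?case
    proof (cases "j = 0")
      case True then show ?thesis unfolding r_def by simp
    next
      case False
      then have j: "j \<in> {1..p}" using Suc.prems by auto
      have "q j \<in> Rs X r (j - 1)" using Suc.IH[OF j] .
      moreover have "E (q j) (q (Suc j))" using qE j Suc.prems by auto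
      moreover have "q (Suc j) \<in> X" using Suc.prems unfolding X_def by blast
      ultimately have "q (Suc j) \<in> Rs X r (Suc (j - 1))" by auto
      then show ?thesis using False by simp
    qed
  qed
  have rchD: "rch X r v" if v: "v \<in> D" for v
  proof -
    have "(\<lambda>u v. u \<in> D \<union> {q p} \<and> v \<in> D \<union> {q p} \<and> E u v)\<^sup>*\<^sup>* (q p) v"
      using reach v unfolding reachS_def by blast
    then show ?thesis
    proof (induction rule: rtranclp_induct)
      case base
      have "p \<in> {1..p}" using p4 by simp
      then show ?case using qRs unfolding rch_def by blast
    next
      case (step a b)
      have "b \<in> X" using step(2) unfolding X_def using p4 by auto
      then show ?case using L1[OF step(3) _ ] step(2) by blast
    qed
  qed
  have levD: "lev X r v \<ge> p" if v: "v \<in> D" for v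
  proof (rule ccontr)
    assume "\<not> lev X r v \<ge> p"
    then have "lev X r v < p" by simp
    then have "v \<in> q ` {1..Suc (lev X r v)}" using RsQ lev_in[OF rchD[OF v]] by blast
    moreover have "Suc (lev X r v) \<le> p" using \<open>lev X r v < p\<close> by simp
    ultimately have "v \<in> q ` {1..p}" by auto
    then show False using Dq v by blast
  qed
  define col where "col v = 2 * (lev X r v mod 2) + side X r v" for v
  have "proper_colouring D E 4 col"
    unfolding proper_colouring_def
  proof (intro conjI ballI impI)
    fix v assume "v \<in> D"
    have "lev X r v mod 2 \<le> 1" by simp
    then show "col v < 4" unfolding col_def using side_le[of X r v] by linarith
  next
    fix u v assume u: "u \<in> D" and v: "v \<in> D" and e: "E u v"
    have ru: "rch X r u" and rv: "rch X r v" using rchD u v by blast+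
    have ll: "lev X r v \<le> Suc (lev X r u) \<and> lev X r u \<le> Suc (lev X r v)" using L1'[OF rX ru rv e] .
    show "col u \<noteq> col v"
    proof (cases "lev X r u = lev X r v")
      case True
      have "side X r u \<noteq> side X r v"
        using sides[OF T1free p4 XV rX tfX ru rv levD[OF u] True[symmetric] e] .
      then show ?thesis unfolding col_def using True by simp
    next
      case False
      then have "lev X r v = Suc (lev X r u) \<or> lev X r u = Suc (lev X r v)" using ll by auto
      then have "lev X r u mod 2 \<noteq> lev X r v mod 2" by presburger
      then show ?thesis unfolding col_def using side_le[of X r u] side_le[of X r v] by auto
    qed
  qed
  then show ?thesis by blast
qed

end

context sgraph begin

lemma reachS_step: "reachS S a b \<Longrightarrow> b \<in> S \<Longrightarrow> c \<in> S \<Longrightarrow> E b c \<Longrightarrow> reachS S a c"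
  unfolding reachS_def by (simp add: rtranclp.rtrancl_into_rtrancl)

lemma reachS_refl: "reachS S a a"
  unfolding reachS_def by simp

lemma gyarfas:
  assumes T1free: "\<not> contains_induced V E (T1_V p) (T1_E p)" and p4: "p \<ge> 4" and tfY: "tfree Y"
  shows "j = p - k \<Longrightarrow> 1 \<le> k \<Longrightarrow> k \<le> p \<Longrightarrow> qpath k q \<Longrightarrow> D \<subseteq> V \<Longrightarrow> D \<inter> q ` {1..k} = {}
    \<Longrightarrow> (\<forall>v\<in>D. \<forall>i\<in>{1..<k}. \<not> E v (q i)) \<Longrightarrow> (\<forall>v\<in>D. reachS (D \<union> {q k}) (q k) v)
    \<Longrightarrow> q ` {1..k} \<union> D \<subseteq> Y \<Longrightarrow> \<exists>c. proper_colouring D E (j + 4) c"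
proof (induction j arbitrary: k q D)
  case 0
  then have k: "k = p" by simp
  show ?case using base[OF T1free p4 0(4)[unfolded k] 0(5) 0(6)[unfolded k] 0(7)[unfolded k] 0(8)[unfolded k]
      tfree_mono[OF tfY 0(9)[unfolded k]]] by simp
next
  case (Suc j)
  note qp = Suc.prems(4) and DV = Suc.prems(5) and Dq = Suc.prems(6) and anti = Suc.prems(7)
    and reach = Suc.prems(8) and sY = Suc.prems(9)
  have kp: "k < p" "1 \<le> k" using Suc.prems(1,2) by auto
  have qV: "\<forall>i\<in>{1..k}. q i \<in> V" and qinj: "inj_on q {1..k}"
    and qE: "\<forall>i\<in>{1..k}. \<forall>j\<in>{1..k}. E (q i) (q j) \<longleftrightarrow> (j = Suc i \<or> i = Suc j)"
    using qp unfolding qpath_def by blast+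
  have qkY: "q k \<in> Y" using sY kp by auto
  define D1 where "D1 = {v \<in> D. E (q k) v}"
  define D2 where "D2 = D - D1"
  define S where "S v = {x \<in> D1. reachS (D2 \<union> {x}) x v}" for v
  define xo where "xo v = Min (S v)" for v
  define K where "K x = {v \<in> D2. xo v = x}" for x
  have finS: "finite (S v)" for v
  proof -
    have "S v \<subseteq> V" unfolding S_def D1_def using DV by auto
    then show ?thesis using finite_subset finV by blast
  qed
  have Sne: "S v \<noteq> {}" if v: "v \<in> D2" for v
  proof -
    have "(\<lambda>u v. u \<in> D \<union> {q k} \<and> v \<in> D \<union> {q k} \<and> E u v)\<^sup>*\<^sup>* (q k) v"
      using reach v unfolding reachS_def D2_def by blast
    then have "v \<in> D2 \<longrightarrow> (\<exists>x\<in>D1. reachS (D2 \<union> {x}) x v)"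
    proof (induction rule: rtranclp_induct)
      case base
      have "q k \<notin> D" using Dq kp by auto
      then show ?case unfolding D2_def by blast
    next
      case (step a b)
      show ?case
      proof
        assume b: "b \<in> D2"
        have ab: "E a b" "a \<in> D \<union> {q k}" using step(2) by blast+
        show "\<exists>x\<in>D1. reachS (D2 \<union> {x}) x b"
        proof (cases "a = q k")
          case True
          then have "b \<in> D1" using ab b unfolding D1_def D2_def by blast
          then show ?thesis using b unfolding D1_def D2_def by blast
        next
          case False
          then have aD: "a \<in> D" using ab by blast
          show ?thesis
          proof (cases "a \<in> D1")
            case True
            have "reachS (D2 \<union> {a}) a b" using reachS_step[OF reachS_refl _ _ ab(1)] b by blast
            then show ?thesis using True by blast
          next
            case False
            then have "a \<in> D2" using aD unfolding D2_def by blast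
            then obtain x where x: "x \<in> D1" "reachS (D2 \<union> {x}) x a" using step(3) by blast
            have "reachS (D2 \<union> {x}) x b" using reachS_step[OF x(2) _ _ ab(1)] b \<open>a \<in> D2\<close> by blast
            then show ?thesis using x(1) by blast
          qed
        qed
      qed
    qed
    then show ?thesis using v unfolding S_def by blast
  qed
  have Seq: "S a = S b" if ab: "a \<in> D2" "b \<in> D2" "E a b" for a b
  proof -
    have "reachS (D2 \<union> {x}) x b" if "reachS (D2 \<union> {x}) x a" for x
      using reachS_step[OF that _ _ ab(3)] ab by blast
    moreover have "reachS (D2 \<union> {x}) x a" if "reachS (D2 \<union> {x}) x b" for x
      using reachS_step[OF that _ _ symE[OF ab(3)]] ab by blast
    ultimately show ?thesis unfolding S_def by blast
  qed
  have xoD1: "xo v \<in> D1" "v \<in> K (xo v)" if v: "v \<in> D2" for v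
  proof -
    show "xo v \<in> D1" using Min_in[OF finS Sne[OF v]] unfolding xo_def S_def by blast
    show "v \<in> K (xo v)" using v unfolding K_def by blast
  qed
  have sub: "\<exists>c. proper_colouring (K x) E (j + 4) c" if x: "x \<in> D1" for x
  proof -
    define q' where "q' = q(Suc k := x)"
    have q'eq: "\<And>i. i \<le> k \<Longrightarrow> q' i = q i" unfolding q'_def by simp
    have q'k: "q' (Suc k) = x" unfolding q'_def by simp
    have xD: "x \<in> D" "E (q k) x" using x unfolding D1_def by blast+
    have xnq: "x \<notin> q ` {1..k}" using xD Dq by blast
    have xanti: "\<And>i. i \<in> {1..k} \<Longrightarrow> E x (q i) \<longleftrightarrow> i = k"
    proof -
      fix i assume i: "i \<in> {1..k}"
      show "E x (q i) \<longleftrightarrow> i = k"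
      proof (cases "i = k")
        case True then show ?thesis using symE[OF xD(2)] by simp
      next
        case False then have "i \<in> {1..<k}" using i by auto
        then show ?thesis using anti xD(1) False by blast
      qed
    qed
    have qp': "qpath (Suc k) q'"
      unfolding qpath_def
    proof (intro conjI ballI)
      fix i assume i: "i \<in> {1..Suc k}"
      show "q' i \<in> V"
        using i qV q'eq q'k xD DV by (cases "i = Suc k") auto
    next
      show "inj_on q' {1..Suc k}"
      proof (rule inj_onI)
        fix i i' assume i: "i \<in> {1..Suc k}" and i': "i' \<in> {1..Suc k}" and e: "q' i = q' i'"
        consider "i = Suc k" "i' = Suc k" | "i = Suc k" "i' \<le> k" | "i \<le> k" "i' = Suc k" | "i \<le> k" "i' \<le> k"
          using i i' by force
        then show "i = i'"
        proof cases
          case 1 then show ?thesis by simp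
        next
          case 2
          then have "x = q i'" using e q'eq[of i'] q'k by simp
          moreover have "i' \<in> {1..k}" using i' 2 by simp
          ultimately have "x \<in> q ` {1..k}" by blast
          then show ?thesis using xnq by blast
        next
          case 3
          then have "x = q i" using e q'eq[of i] q'k by simp
          moreover have "i \<in> {1..k}" using i 3 by simp
          ultimately have "x \<in> q ` {1..k}" by blast
          then show ?thesis using xnq by blast
        next
          case 4 then show ?thesis using e q'eq inj_onD[OF qinj] i i' by simp
        qed
      qed
    next
      fix i i' assume i: "i \<in> {1..Suc k}" and i': "i' \<in> {1..Suc k}"
      consider "i = Suc k" "i' = Suc k" | "i = Suc k" "i' \<le> k" | "i \<le> k" "i' = Suc k" | "i \<le> k" "i' \<le> k"
        using i i' by force
      then show "E (q' i) (q' i') \<longleftrightarrow> (i' = Suc i \<or> i = Suc i')"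
      proof cases
        case 1 then show ?thesis using irr by simp
      next
        case 2 then show ?thesis using q'eq q'k xanti[of i'] i' by auto
      next
        case 3
        have "E (q i) x \<longleftrightarrow> E x (q i)" using symE by blast
        then show ?thesis using 3 q'eq q'k xanti[of i] i by auto
      next
        case 4 then show ?thesis using q'eq qE i i' by auto
      qed
    qed
    have KD2: "K x \<subseteq> D2" unfolding K_def by blast
    have KV: "K x \<subseteq> V" using KD2 DV unfolding D2_def by blast
    have Kq: "K x \<inter> q' ` {1..Suc k} = {}"
    proof -
      have "q' ` {1..Suc k} = insert x (q ` {1..k})"
      proof
        show "q' ` {1..Suc k} \<subseteq> insert x (q ` {1..k})"
        proof
          fix w assume "w \<in> q' ` {1..Suc k}"
          then obtain i where i: "i \<in> {1..Suc k}" "w = q' i" by blast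
          then show "w \<in> insert x (q ` {1..k})" using q'eq q'k by (cases "i = Suc k") auto
        qed
      next
        show "insert x (q ` {1..k}) \<subseteq> q' ` {1..Suc k}"
        proof
          fix w assume "w \<in> insert x (q ` {1..k})"
          then show "w \<in> q' ` {1..Suc k}"
          proof
            assume wx: "w = x"
            have "Suc k \<in> {1..Suc k}" by simp
            then show ?thesis using q'k wx by (metis image_eqI)
          next
            assume "w \<in> q ` {1..k}"
            then obtain i where i: "i \<in> {1..k}" "w = q i" by blast
            then have "w = q' i" using q'eq[of i] by simp
            moreover have "i \<in> {1..Suc k}" using i by simp
            ultimately show ?thesis by blast
          qed
        qed
      qed
      moreover have "x \<notin> K x" using KD2 x unfolding D2_def by blast
      moreover have "K x \<subseteq> D" using KD2 unfolding D2_def by blast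
      ultimately show ?thesis using Dq by auto
    qed
    have Kanti: "\<forall>v\<in>K x. \<forall>i\<in>{1..<Suc k}. \<not> E v (q' i)"
    proof (intro ballI)
      fix v i assume v: "v \<in> K x" and i: "i \<in> {1..<Suc k}"
      have vD: "v \<in> D" "\<not> E (q k) v" using v KD2 unfolding D2_def D1_def by blast+
      show "\<not> E v (q' i)"
      proof (cases "i = k")
        case True
        have "q' i = q k" using q'eq[of k] True by simp
        moreover have "\<not> E v (q k)" using vD(2) symE by blast
        ultimately show ?thesis by simp
      next
        case False then have "i \<in> {1..<k}" using i by auto
        then show ?thesis using anti vD(1) q'eq by auto
      qed
    qed
    have Kreach: "\<forall>v\<in>K x. reachS (K x \<union> {q' (Suc k)}) (q' (Suc k)) v"
    proof
      fix v assume v: "v \<in> K x"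
      have vS: "x \<in> S v" using v Min_in[OF finS Sne] unfolding K_def xo_def by blast
      then have "reachS (D2 \<union> {x}) x v" unfolding S_def by blast
      then have "(\<lambda>u v. u \<in> D2 \<union> {x} \<and> v \<in> D2 \<union> {x} \<and> E u v)\<^sup>*\<^sup>* x v" unfolding reachS_def .
      then have "v \<in> D2 \<longrightarrow> xo v = x \<longrightarrow> reachS (K x \<union> {x}) x v"
      proof (induction rule: rtranclp_induct)
        case base then show ?case using x unfolding D2_def by blast
      next
        case (step a b)
        show ?case
        proof (intro impI)
          assume b: "b \<in> D2" "xo b = x"
          have bK: "b \<in> K x" using b unfolding K_def by blast
          have ab: "E a b" "a \<in> D2 \<union> {x}" using step(2) by blast+
          show "reachS (K x \<union> {x}) x b"
          proof (cases "a = x")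
            case True
            then show ?thesis using reachS_step[OF reachS_refl _ _ ab(1)] bK by blast
          next
            case False
            then have aD2: "a \<in> D2" using ab by blast
            have "xo a = x" using Seq[OF aD2 b(1) ab(1)] b(2) unfolding xo_def by simp
            then have "reachS (K x \<union> {x}) x a" "a \<in> K x" using step(3) aD2 unfolding K_def by blast+
            then show ?thesis using reachS_step[of "K x \<union> {x}" x a b] ab(1) bK by blast
          qed
        qed
      qed
      then show "reachS (K x \<union> {q' (Suc k)}) (q' (Suc k)) v" unfolding q'k using v unfolding K_def by blast
    qed
    have KY: "q' ` {1..Suc k} \<union> K x \<subseteq> Y"
    proof -
      have "q' ` {1..Suc k} \<subseteq> insert x (q ` {1..k})"
      proof
        fix w assume "w \<in> q' ` {1..Suc k}"
        then obtain i where i: "i \<in> {1..Suc k}" "w = q' i" by blast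
        then show "w \<in> insert x (q ` {1..k})" using q'eq q'k by (cases "i = Suc k") auto
      qed
      then show ?thesis using sY xD(1) KD2 unfolding D2_def by blast
    qed
    have jj: "j = p - Suc k" using Suc.prems(1) by simp
    show ?thesis by (rule Suc.IH[OF jj _ _ qp' KV Kq Kanti Kreach KY]) (use kp in auto)
  qed
  define cx where "cx x = (SOME c. proper_colouring (K x) E (j + 4) c)" for x
  have cxp: "proper_colouring (K x) E (j + 4) (cx x)" if "x \<in> D1" for x
    using someI_ex[OF sub[OF that]] unfolding cx_def .
  define col where "col v = (if v \<in> D1 then 0 else Suc (cx (xo v) v))" for v
  have "proper_colouring D E (Suc j + 4) col"
    unfolding proper_colouring_def
  proof (intro conjI ballI impI)
    fix v assume v: "v \<in> D"
    show "col v < Suc j + 4"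
    proof (cases "v \<in> D1")
      case True then show ?thesis unfolding col_def by simp
    next
      case False
      then have v2: "v \<in> D2" using v unfolding D2_def by blast
      have "cx (xo v) v < j + 4" using cxp[OF xoD1(1)[OF v2]] xoD1(2)[OF v2] unfolding proper_colouring_def by blast
      then show ?thesis unfolding col_def using False by simp
    qed
  next
    fix u v assume u: "u \<in> D" and v: "v \<in> D" and e: "E u v"
    show "col u \<noteq> col v"
    proof (cases "u \<in> D1")
      case True
      show ?thesis
      proof (cases "v \<in> D1")
        case True
        have "E (q k) u" "E (q k) v" using \<open>u \<in> D1\<close> True unfolding D1_def by blast+
        then have False using tfD[OF tfY qkY _ _ _ e] u v sY by blast
        then show ?thesis ..
      next
        case False then show ?thesis using \<open>u \<in> D1\<close> unfolding col_def by simp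
      qed
    next
      case False
      note uD1 = False
      show ?thesis
      proof (cases "v \<in> D1")
        case True then show ?thesis using uD1 unfolding col_def by simp
      next
        case False
        have u2: "u \<in> D2" and v2: "v \<in> D2" using u v uD1 False unfolding D2_def by blast+
        have xeq: "xo u = xo v" using Seq[OF u2 v2 e] unfolding xo_def by simp
        have "cx (xo u) u \<noteq> cx (xo u) v"
          using cxp[OF xoD1(1)[OF u2]] xoD1(2)[OF u2] xoD1(2)[OF v2] xeq e
          unfolding proper_colouring_def by metis
        then show ?thesis unfolding col_def using uD1 False xeq by simp
      qed
    qed
  qed
  then show ?case by blast
qed

end

context sgraph begin

definition gcomp :: "nat \<Rightarrow> nat set" where
  "gcomp v = {w. E\<^sup>*\<^sup>* v w}"

lemma conn_sym: "E\<^sup>*\<^sup>* a b \<Longrightarrow> E\<^sup>*\<^sup>* b a"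
proof (induction rule: rtranclp_induct)
  case base then show ?case by simp
next
  case (step y z)
  have "E z y" using symE[OF step(2)] .
  then show ?case using step(3) by (rule converse_rtranclp_into_rtranclp)
qed

lemma gcomp_eq: assumes ab: "E\<^sup>*\<^sup>* a b" shows "gcomp a = gcomp b"
proof
  show "gcomp a \<subseteq> gcomp b"
  proof
    fix x assume "x \<in> gcomp a"
    then have "E\<^sup>*\<^sup>* a x" unfolding gcomp_def by simp
    then have "E\<^sup>*\<^sup>* b x" using conn_sym[OF ab] by (rule rtranclp_trans[rotated])
    then show "x \<in> gcomp b" unfolding gcomp_def by simp
  qed
next
  show "gcomp b \<subseteq> gcomp a"
  proof
    fix x assume "x \<in> gcomp b"
    then have "E\<^sup>*\<^sup>* b x" unfolding gcomp_def by simp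
    then have "E\<^sup>*\<^sup>* a x" using ab by (rule rtranclp_trans[rotated])
    then show "x \<in> gcomp a" unfolding gcomp_def by simp
  qed
qed

lemma gcomp_self: "v \<in> gcomp v" unfolding gcomp_def by simp

lemma gcomp_V: "v \<in> V \<Longrightarrow> gcomp v \<subseteq> V"
proof
  fix w assume v: "v \<in> V" and "w \<in> gcomp v"
  then have "E\<^sup>*\<^sup>* v w" unfolding gcomp_def by simp
  then show "w \<in> V"
    by (induction rule: rtranclp_induct) (use v edgeV in auto)
qed

lemma colour_mono: "proper_colouring S E k c \<Longrightarrow> k \<le> N \<Longrightarrow> proper_colouring S E N c"
  unfolding proper_colouring_def by auto

lemma gcomp_union:
  assumes h: "\<forall>v\<in>V. \<exists>c. proper_colouring (gcomp v) E N c"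
  shows "\<exists>c. proper_colouring V E N c"
proof -
  define cc where "cc v = (SOME c. proper_colouring (gcomp v) E N c)" for v
  have ccp: "proper_colouring (gcomp v) E N (cc v)" if "v \<in> V" for v
    using someI_ex[OF h[rule_format, OF that]] unfolding cc_def .
  define col where "col v = cc v v" for v
  have "proper_colouring V E N col"
    unfolding proper_colouring_def
  proof (intro conjI ballI impI)
    fix v assume v: "v \<in> V"
    show "col v < N" using ccp[OF v] gcomp_self[of v] unfolding proper_colouring_def col_def by blast
  next
    fix u v assume u: "u \<in> V" and v: "v \<in> V" and e: "E u v"
    have ce: "gcomp u = gcomp v" using gcomp_eq e by blast
    then have "cc u = cc v" unfolding cc_def by simp
    moreover have "v \<in> gcomp u" using ce gcomp_self by simp
    ultimately show "col u \<noteq> col v"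
      using ccp[OF u] gcomp_self[of u] e unfolding proper_colouring_def col_def by metis
  qed
  then show ?thesis by blast
qed

lemma reach_comp: "E\<^sup>*\<^sup>* r v \<Longrightarrow> reachS (gcomp r) r v"
proof (induction rule: rtranclp_induct)
  case base then show ?case by (rule reachS_refl)
next
  case (step y z)
  have "y \<in> gcomp r" "z \<in> gcomp r" using step(1,2) unfolding gcomp_def by auto
  then show ?case using reachS_step[OF step(3) _ _ step(2)] by blast
qed

lemma tf_comp:
  assumes T1free: "\<not> contains_induced V E (T1_V p) (T1_E p)" and p4: "p \<ge> 4"
    and r: "r \<in> V" and tf: "tfree (gcomp r)"
  shows "\<exists>c. proper_colouring (gcomp r) E (p + 4) c"
proof -
  define q where "q = (\<lambda>_::nat. r)"
  define D where "D = gcomp r - {r}"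
  have qp: "qpath 1 q" unfolding qpath_def q_def using r irr by auto
  have DV: "D \<subseteq> V" unfolding D_def using gcomp_V[OF r] by blast
  have Dq: "D \<inter> q ` {1..1} = {}" unfolding D_def q_def by auto
  have anti: "\<forall>v\<in>D. \<forall>i\<in>{1..<1}. \<not> E v (q i)" by simp
  have DU: "D \<union> {q 1} = gcomp r" unfolding D_def q_def using gcomp_self[of r] by auto
  have reach: "\<forall>v\<in>D. reachS (D \<union> {q 1}) (q 1) v"
    unfolding DU using reach_comp unfolding D_def q_def gcomp_def by blast
  have sY: "q ` {1..1} \<union> D \<subseteq> gcomp r" unfolding D_def q_def using gcomp_self[of r] by auto
  obtain c where c: "proper_colouring D E ((p - 1) + 4) c"
    using gyarfas[OF T1free p4 tf refl _ _ qp DV Dq anti reach sY] p4 by auto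
  define col where "col v = (if v = r then p + 3 else c v)" for v
  have "proper_colouring (gcomp r) E (p + 4) col"
    unfolding proper_colouring_def
  proof (intro conjI ballI impI)
    fix v assume v: "v \<in> gcomp r"
    show "col v < p + 4"
    proof (cases "v = r")
      case True then show ?thesis unfolding col_def by simp
    next
      case False then have "v \<in> D" using v unfolding D_def by blast
      then have "c v < (p - 1) + 4" using c unfolding proper_colouring_def by blast
      then show ?thesis unfolding col_def using False p4 by simp
    qed
  next
    fix u v assume u: "u \<in> gcomp r" and v: "v \<in> gcomp r" and e: "E u v"
    have uv: "u \<noteq> v" using e irr by blast
    show "col u \<noteq> col v"
    proof (cases "u = r")
      case True
      then have "v \<in> D" using v uv unfolding D_def by blast
      then have "c v < (p - 1) + 4" using c unfolding proper_colouring_def by blast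
      then show ?thesis unfolding col_def using True uv p4 by simp
    next
      case False
      note ur = False
      show ?thesis
      proof (cases "v = r")
        case True
        then have "u \<in> D" using u ur unfolding D_def by blast
        then have "c u < (p - 1) + 4" using c unfolding proper_colouring_def by blast
        then show ?thesis unfolding col_def using True uv p4 by simp
      next
        case False
        then have "u \<in> D" "v \<in> D" using u v ur unfolding D_def by blast+
        then have "c u \<noteq> c v" using c e unfolding proper_colouring_def by blast
        then show ?thesis unfolding col_def using False ur by simp
      qed
    qed
  qed
  then show ?thesis by blast
qed

end

context sgraph begin

lemma paw_nb:
  assumes pf: "\<not> contains_induced V E paw_V paw_E"
    and e: "E v a" "E v b" "E a b" "E v c" "\<not> E c a" "\<not> E c b"
  shows False
proof -
  have "a \<in> V" "b \<in> V" "v \<in> V" "c \<in> V" using edgeV e by blast+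
  then have "contains_induced V E paw_V paw_E"
    using paw_embed[of E a V b v c] e symE irr by blast
  then show False using pf by blast
qed

definition tri :: "nat \<Rightarrow> bool" where
  "tri v \<longleftrightarrow> (\<exists>a b. E v a \<and> E v b \<and> E a b)"

lemma edge_tri:
  assumes pf: "\<not> contains_induced V E paw_V paw_E" and t: "tri v" and e: "E v w"
  shows "\<exists>s. E v s \<and> E w s"
proof -
  obtain a b where ab: "E v a" "E v b" "E a b" using t unfolding tri_def by blast
  show ?thesis
  proof (cases "w = a")
    case True then show ?thesis using ab by blast
  next
    case wa: False
    show ?thesis
    proof (cases "w = b")
      case True then show ?thesis using ab symE by blast
    next
      case wb: False
      show ?thesis
      proof (cases "E w a")
        case True then show ?thesis using ab by blast
      next
        case nwa: False
        show ?thesis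
        proof (cases "E w b")
          case True then show ?thesis using ab by blast
        next
          case False
          then have False using paw_nb[OF pf ab e nwa] by blast
          then show ?thesis ..
        qed
      qed
    qed
  qed
qed

lemma tri_prop:
  assumes pf: "\<not> contains_induced V E paw_V paw_E" and t: "tri v" and e: "E v w"
  shows "tri w"
proof -
  obtain s where "E v s" "E w s" using edge_tri[OF pf t e] by blast
  then show ?thesis unfolding tri_def using symE[OF e] by blast
qed

lemma tri_conn:
  assumes pf: "\<not> contains_induced V E paw_V paw_E"
  shows "E\<^sup>*\<^sup>* t v \<Longrightarrow> tri t \<Longrightarrow> tri v"
  by (induction rule: rtranclp_induct) (use tri_prop[OF pf] in blast)+

lemma dist2:
  assumes pf: "\<not> contains_induced V E paw_V paw_E" and tw: "tri w"
    and e: "E w b" "E w a" "E a c" "\<not> E b a" "\<not> E b c"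
  shows False
proof (cases "E w c")
  case True
  show False using paw_nb[OF pf e(2) True e(3) e(1) e(4) e(5)] .
next
  case False
  obtain s where s: "E w s" "E a s" using edge_tri[OF pf tw e(2)] by blast
  have sc: "E s c"
  proof (rule ccontr)
    assume nsc: "\<not> E s c"
    have "\<not> E c w" using False symE by blast
    moreover have "\<not> E c s" using nsc symE by blast
    ultimately show False using paw_nb[OF pf symE[OF e(2)] s(2) s(1) e(3)] by blast
  qed
  show False
  proof (cases "E s b")
    case True
    show False using paw_nb[OF pf symE[OF s(2)] sc e(3) True e(4) e(5)] .
  next
    case nsb: False
    have "\<not> E b s" using nsb symE by blast
    then show False using paw_nb[OF pf s(1) e(2) symE[OF s(2)] e(1) _ e(4)] by blast
  qed
qed

lemma noK1K2:
  assumes pf: "\<not> contains_induced V E paw_V paw_E"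
    and closed: "\<forall>y z. y \<in> C \<longrightarrow> E y z \<longrightarrow> z \<in> C" and alltri: "\<forall>v\<in>C. tri v"
    and ac: "E a c"
  shows "E\<^sup>*\<^sup>* b a \<Longrightarrow> b \<in> C \<Longrightarrow> \<not> E b a \<Longrightarrow> \<not> E b c \<Longrightarrow> b \<noteq> a \<Longrightarrow> b \<noteq> c \<Longrightarrow> False"
proof (induction rule: converse_rtranclp_induct)
  case base then show ?case by simp
next
  case (step y z)
  have zC: "z \<in> C" using closed step.prems(1) step.hyps(1) by blast
  have tz: "tri z" using alltri zC by blast
  have zy: "E z y" using symE[OF step.hyps(1)] .
  show False
  proof (cases "z = a")
    case True then show False using step.hyps(1) step.prems(2) by simp
  next
    case za: False
    show False
    proof (cases "z = c")
      case True then show False using step.hyps(1) step.prems(3) by simp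
    next
      case zc: False
      show False
      proof (cases "E z a")
        case True show False using dist2[OF pf tz zy True ac step.prems(2,3)] .
      next
        case nza: False
        show False
        proof (cases "E z c")
          case True show False using dist2[OF pf tz zy True symE[OF ac] step.prems(3,2)] .
        next
          case False
          show False using step.IH[OF zC nza False za zc] .
        qed
      qed
    qed
  qed
qed

end

context sgraph begin

lemma paw_comp:
  assumes pf: "\<not> contains_induced V E paw_V paw_E"
    and nK: "\<not> contains_subgraph V E (Kdt_V d t) Kdt_E"
    and r: "r \<in> V" and ntf: "\<not> tfree (gcomp r)"
  shows "\<exists>c. proper_colouring (gcomp r) E (d * t) c"
proof -
  define C where "C = gcomp r"
  have CV: "C \<subseteq> V" unfolding C_def using gcomp_V[OF r] .
  have finC: "finite C" using CV finV finite_subset by blast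
  have closed: "\<forall>y z. y \<in> C \<longrightarrow> E y z \<longrightarrow> z \<in> C"
    unfolding C_def gcomp_def by (simp add: rtranclp.rtrancl_into_rtrancl)
  obtain a b c where abc: "a \<in> C" "b \<in> C" "c \<in> C" "E a b" "E b c" "E a c"
    using ntf unfolding tfree_def C_def by blast
  have ta: "tri a" unfolding tri_def using abc by blast
  have alltri: "\<forall>v\<in>C. tri v"
  proof
    fix v assume v: "v \<in> C"
    have "E\<^sup>*\<^sup>* r a" "E\<^sup>*\<^sup>* r v" using abc(1) v unfolding C_def gcomp_def by auto
    then have "E\<^sup>*\<^sup>* a v" using conn_sym rtranclp_trans by metis
    then show "tri v" using tri_conn[OF pf] ta by blast
  qed
  have rC: "\<And>v. v \<in> C \<Longrightarrow> E\<^sup>*\<^sup>* v r"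
    unfolding C_def gcomp_def using conn_sym by blast
  have rC': "\<And>v. v \<in> C \<Longrightarrow> E\<^sup>*\<^sup>* r v"
    unfolding C_def gcomp_def by blast
  define \<rho> where "\<rho> u v \<longleftrightarrow> (u = v \<or> \<not> E u v)" for u v
  have \<rho>sym: "\<rho> u v \<Longrightarrow> \<rho> v u" for u v unfolding \<rho>_def using symE by blast
  have \<rho>trans: "\<rho> u w" if "u \<in> C" "v \<in> C" "w \<in> C" "\<rho> u v" "\<rho> v w" for u v w
  proof (cases "u = v \<or> v = w \<or> u = w")
    case True then show ?thesis using that unfolding \<rho>_def by blast
  next
    case False
    then have h: "\<not> E u v" "\<not> E v w" "u \<noteq> v" "v \<noteq> w" "u \<noteq> w" using that unfolding \<rho>_def by blast+
    show ?thesis unfolding \<rho>_def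
    proof (rule ccontr)
      assume "\<not> (u = w \<or> \<not> E u w)"
      then have uw: "E u w" by blast
      have vu: "E\<^sup>*\<^sup>* v u" using rC[OF that(2)] rC'[OF that(1)] rtranclp_trans by metis
      have "\<not> E v u" using h(1) symE by blast
      then show False using noK1K2[OF pf closed alltri uw vu that(2) _ h(2)] h by blast
    qed
  qed
  define cls where "cls v = {u \<in> C. \<rho> u v}" for v
  define rep where "rep v = Min (cls v)" for v
  have vcls: "v \<in> cls v" if "v \<in> C" for v using that unfolding cls_def \<rho>_def by simp
  have fincls: "finite (cls v)" for v unfolding cls_def using finC by simp
  have repin: "rep v \<in> cls v" if "v \<in> C" for v
    unfolding rep_def using Min_in[OF fincls] vcls[OF that] by blast
  have repC: "rep v \<in> C" "\<rho> (rep v) v" if "v \<in> C" for v using repin[OF that] unfolding cls_def by blast+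
  have clseq: "cls u = cls v" if "u \<in> C" "v \<in> C" "\<rho> u v" for u v
    unfolding cls_def using \<rho>trans \<rho>sym that by blast
  have repneq: "rep u \<noteq> rep v" if "u \<in> C" "v \<in> C" "E u v" for u v
  proof
    assume eq: "rep u = rep v"
    have "\<rho> (rep u) u" "\<rho> (rep u) v" using repC that eq by metis+
    then have "\<rho> u v" using \<rho>trans[of u "rep u" v] \<rho>sym repC that by blast
    then show False using that irr unfolding \<rho>_def by blast
  qed
  define R where "R = rep ` C"
  have RC: "R \<subseteq> C" unfolding R_def using repC by blast
  have finR: "finite R" using RC finC finite_subset by blast
  have clique: "E x y" if xR: "x \<in> R" "y \<in> R" "x \<noteq> y" for x y
  proof (rule ccontr)
    assume nxy: "\<not> E x y"
    obtain u v where uv: "u \<in> C" "v \<in> C" "x = rep u" "y = rep v" using xR unfolding R_def by blast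
    have "\<rho> x y" unfolding \<rho>_def using nxy by blast
    then have "\<rho> u y" using \<rho>trans[of u x y] \<rho>sym repC uv by blast
    then have "\<rho> u v" using \<rho>trans[of u y v] repC uv by blast
    then have "cls u = cls v" using clseq uv by blast
    then have "x = y" using uv unfolding rep_def by simp
    then show False using xR(3) by blast
  qed
  have cardR: "card R < d * t"
  proof (rule ccontr)
    assume "\<not> card R < d * t"
    then have le: "card (Kdt_V d t) \<le> card R" unfolding Kdt_V_def by (simp add: card_cartesian_product)
    obtain f where f: "f ` Kdt_V d t \<subseteq> R" "inj_on f (Kdt_V d t)"
      using card_le_inj[OF _ finR le] unfolding Kdt_V_def by blast
    have "contains_subgraph V E (Kdt_V d t) Kdt_E"
      unfolding contains_subgraph_def
    proof (intro exI conjI ballI impI)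
      show "inj_on f (Kdt_V d t)" using f(2) .
      show "f ` Kdt_V d t \<subseteq> V" using f(1) RC CV by blast
    next
      fix u v assume u: "u \<in> Kdt_V d t" and v: "v \<in> Kdt_V d t" and k: "Kdt_E u v"
      have "u \<noteq> v" using k unfolding Kdt_E_def by blast
      then have "f u \<noteq> f v" using inj_onD[OF f(2) _ u v] by blast
      then show "E (f u) (f v)" using clique f(1) u v by blast
    qed
    then show False using nK by blast
  qed
  define col where "col v = card {x \<in> R. x < rep v}" for v
  have lessmono: "col u < col v" if "u \<in> C" "v \<in> C" "rep u < rep v" for u v
  proof -
    have "{x \<in> R. x < rep u} \<subset> {x \<in> R. x < rep v}"
    proof
      show "{x \<in> R. x < rep u} \<subseteq> {x \<in> R. x < rep v}" using that by auto
      have "rep u \<in> R" unfolding R_def using that by blast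
      then show "{x \<in> R. x < rep u} \<noteq> {x \<in> R. x < rep v}" using that by blast
    qed
    then show ?thesis unfolding col_def by (rule psubset_card_mono[rotated]) (use finR in simp)
  qed
  have "proper_colouring C E (d * t) col"
    unfolding proper_colouring_def
  proof (intro conjI ballI impI)
    fix v assume v: "v \<in> C"
    have "{x \<in> R. x < rep v} \<subset> R"
    proof
      show "{x \<in> R. x < rep v} \<subseteq> R" by blast
      have "rep v \<in> R" unfolding R_def using v by blast
      then show "{x \<in> R. x < rep v} \<noteq> R" by blast
    qed
    then have "col v < card R" unfolding col_def using psubset_card_mono finR by blast
    then show "col v < d * t" using cardR by simp
  next
    fix u v assume u: "u \<in> C" and v: "v \<in> C" and e: "E u v"
    have "rep u \<noteq> rep v" using repneq u v e by blast
    then have "rep u < rep v \<or> rep v < rep u" by auto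
    then show "col u \<noteq> col v" using lessmono[OF u v] lessmono[OF v u] by fastforce
  qed
  then show ?thesis unfolding C_def by blast
qed

end

theorem theorem8:
  fixes p d :: nat
  assumes "p \<ge> 4" and "d \<ge> 1"
  shows "\<exists>f :: real poly. \<forall>t :: nat. t \<ge> 1 \<longrightarrow>
    (\<forall>(V :: nat set) E. simple_graph V E \<longrightarrow>
       H_free V E paw_V paw_E \<longrightarrow>
       H_free V E (T1_V p) (T1_E p) \<longrightarrow>
       \<not> contains_subgraph V E (Kdt_V d t) Kdt_E \<longrightarrow>
       real (chromatic_number V E) \<le> poly f (real t))"
proof (rule exI[of _ "[:real p + 4, real d:]"], intro allI impI)
  fix t :: nat and V :: "nat set" and E :: "nat \<Rightarrow> nat \<Rightarrow> bool"
  assume t: "t \<ge> 1" and sg: "simple_graph V E" and pfH: "H_free V E paw_V paw_E"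
    and tfH: "H_free V E (T1_V p) (T1_E p)" and nK: "\<not> contains_subgraph V E (Kdt_V d t) Kdt_E"
  interpret sgraph V E by (rule sgraph.intro) (rule sg)
  have pf: "\<not> contains_induced V E paw_V paw_E" using pfH unfolding H_free_def .
  have T1free: "\<not> contains_induced V E (T1_V p) (T1_E p)" using tfH unfolding H_free_def .
  define N where "N = p + 4 + d * t"
  have "\<forall>v\<in>V. \<exists>c. proper_colouring (gcomp v) E N c"
  proof
    fix v assume v: "v \<in> V"
    show "\<exists>c. proper_colouring (gcomp v) E N c"
    proof (cases "tfree (gcomp v)")
      case True
      obtain c where "proper_colouring (gcomp v) E (p + 4) c" using tf_comp[OF T1free assms(1) v True] by blast
      then have "proper_colouring (gcomp v) E N c" by (rule colour_mono) (simp add: N_def)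
      then show ?thesis by blast
    next
      case False
      obtain c where "proper_colouring (gcomp v) E (d * t) c" using paw_comp[OF pf nK v False] by blast
      then have "proper_colouring (gcomp v) E N c" by (rule colour_mono) (simp add: N_def)
      then show ?thesis by blast
    qed
  qed
  then obtain c where c: "proper_colouring V E N c" using gcomp_union by blast
  have "chromatic_number V E \<le> N"
    unfolding chromatic_number_def by (rule Least_le) (use c in blast)
  then have "real (chromatic_number V E) \<le> real N" by simp
  also have "real N = poly [:real p + 4, real d:] (real t)" unfolding N_def by (simp add: algebra_simps)
  finally show "real (chromatic_number V E) \<le> poly [:real p + 4, real d:] (real t)" .
qed


end
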